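(* Let $n \ge 4$ and let $\frac{a_1}{b_1} < \frac{a_2}{b_2} < \cdots$ be the Farey sequence of order $n$. Let $f(n)$ be the largest integer such that $(a_l - a_k)(b_l - b_k) \ge 0$ for all indices $k, l$ with $|l-k| \le f(n)$. Then $$f(n) \le \left\lfloor \frac{n}{4} \right\rfloor + d,$$ where $d = 1, 2, 2, 4$ according as $n \equiv 0, 1, 2, 3 \pmod 4$.
   Context: The Farey sequence of order $n$ is the increasing list of all reduced fractions $\frac{a}{b}$ with $0 \le \frac{a}{b} \le 1$ and $1 \le b \le n$ (including $\frac01$ and $\frac11$), each written in lowest terms. Two fractions $\frac{a}{b}, \frac{a'}{b'}$ (in lowest terms) are called similarly ordered if $(a'-a)(b'-b) \ge 0$. For $n \ge 4$ the Farey sequence of order $n$ contains two fractions that are not similarly ordered, so $f(n)$ is well defined. *)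

theory Defs
  imports Complex_Main "HOL-Library.Product_Lexorder"
begin

text \<open>Indexing is 0-based (irrelevant for the statement, which only uses index differences).\<close>
definition farey :: "nat \<Rightarrow> (nat \<times> nat) list" where
  "farey n = sort_key (\<lambda>(a,b). (of_nat a / of_nat b :: rat))
     (sorted_list_of_set {(a,b). 1 \<le> b \<and> b \<le> n \<and> a \<le> b \<and> coprime a b})"

definition similarly_ordered :: "nat \<times> nat \<Rightarrow> nat \<times> nat \<Rightarrow> bool" where
  "similarly_ordered p q \<longleftrightarrow>
     (int (fst q) - int (fst p)) * (int (snd q) - int (snd p)) \<ge> 0"

definition farey_f :: "nat \<Rightarrow> nat" where
  "farey_f n = (GREATEST m. \<forall>k < length (farey n). \<forall>l < length (farey n).
      nat \<bar>int l - int k\<bar> \<le> m \<longrightarrow> similarly_ordered (farey n ! k) (farey n ! l))"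

definition farey_d :: "nat \<Rightarrow> nat" where
  "farey_d n = (if n mod 4 = 0 then 1 else if n mod 4 = 1 then 2
                else if n mod 4 = 2 then 2 else 4)"

end

theory Submission
  imports Defs
begin

definition fS :: "nat \<Rightarrow> (nat \<times> nat) set" where
  "fS n = {(a,b). 1 \<le> b \<and> b \<le> n \<and> a \<le> b \<and> coprime a b}"

definition fv :: "nat \<times> nat \<Rightarrow> rat" where
  "fv = (\<lambda>(a,b). (of_nat a / of_nat b :: rat))"

lemma fS_finite: "finite (fS n)"
proof -
  have "fS n \<subseteq> {0..n} \<times> {0..n}" by (auto simp: fS_def)
  then show ?thesis by (rule finite_subset) auto
qed

lemma farey_alt: "farey n = sort_key fv (sorted_list_of_set (fS n))"
  unfolding farey_def fS_def fv_def by simp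

lemma set_farey: "set (farey n) = fS n"
  using fS_finite by (simp add: farey_alt)

lemma distinct_farey: "distinct (farey n)"
  by (simp add: farey_alt)

lemma sorted_farey: "sorted (map fv (farey n))"
  by (simp add: farey_alt)

lemma fv_inj: "inj_on fv (fS n)"
proof (rule inj_onI)
  fix x y assume x: "x \<in> fS n" and y: "y \<in> fS n" and e: "fv x = fv y"
  obtain a b where [simp]: "x = (a,b)" by (cases x)
  obtain c d where [simp]: "y = (c,d)" by (cases y)
  have h: "1 \<le> b" "1 \<le> d" "coprime a b" "coprime c d" using x y by (auto simp: fS_def)
  have "of_nat a / of_nat b = (of_nat c / of_nat d :: rat)" using e by (simp add: fv_def)
  then have "of_nat a * of_nat d = (of_nat c * of_nat b :: rat)" using h
    by (simp add: divide_simps)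
  then have "a * d = c * b" by (metis of_nat_eq_iff of_nat_mult)
  then have "a = c \<and> d = b"
    using coprime_crossproduct_nat[of a b c d] h by simp
  then show "x = y" by simp
qed

lemma key:
  assumes p: "p \<in> fS n" and q: "q \<in> fS n" and lt: "fv p < fv q"
    and ns: "\<not> similarly_ordered p q"
    and T: "finite T" "{x \<in> fS n. fv p < fv x \<and> fv x \<le> fv q} \<subseteq> T"
  shows "farey_f n + 1 \<le> card T"
proof -
  let ?xs = "farey n"
  obtain k where k: "k < length ?xs" "?xs ! k = p" using p set_farey by (metis in_set_conv_nth)
  obtain l where l: "l < length ?xs" "?xs ! l = q" using q set_farey by (metis in_set_conv_nth)
  have srt: "sorted (map fv ?xs)" by (rule sorted_farey)
  have kl: "k < l"
  proof (rule ccontr)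
    assume "\<not> k < l"
    then have "fv (?xs ! l) \<le> fv (?xs ! k)"
      using sorted_nth_mono[OF srt, of l k] k by simp
    then show False using lt k l by simp
  qed
  have sub: "(nth ?xs) ` {k<..l} \<subseteq> {x \<in> fS n. fv p < fv x \<and> fv x \<le> fv q}"
  proof
    fix x assume "x \<in> (nth ?xs) ` {k<..l}"
    then obtain j where j: "k < j" "j \<le> l" "x = ?xs ! j" by auto
    have jl: "j < length ?xs" using j l by simp
    have xin: "x \<in> fS n" using j jl set_farey by (metis nth_mem)
    have le1: "fv p \<le> fv x" using sorted_nth_mono[OF srt, of k j] j jl k by simp
    have le2: "fv x \<le> fv q" using sorted_nth_mono[OF srt, of j l] j l by simp
    have "p \<noteq> x" using distinct_farey j jl k by (metis nat_neq_iff nth_eq_iff_index_eq)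
    then have "fv p \<noteq> fv x" using fv_inj xin p by (metis inj_on_def)
    then show "x \<in> {x \<in> fS n. fv p < fv x \<and> fv x \<le> fv q}" using le1 le2 xin by simp
  qed
  have inj: "inj_on (nth ?xs) {k<..l}"
    using distinct_farey l by (auto simp: inj_on_def nth_eq_iff_index_eq)
  have "l - k = card ((nth ?xs) ` {k<..l})" using inj by (simp add: card_image)
  also have "\<dots> \<le> card T" using sub T by (meson card_mono order_trans)
  finally have lkT: "l - k \<le> card T" .
  define P where "P = (\<lambda>m. \<forall>k < length (farey n). \<forall>l < length (farey n).
      nat \<bar>int l - int k\<bar> \<le> m \<longrightarrow> similarly_ordered (farey n ! k) (farey n ! l))"
  have P0: "P 0" by (auto simp: P_def similarly_ordered_def)
  have Pb: "\<forall>m. P m \<longrightarrow> m < l - k"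
  proof (intro allI impI)
    fix m assume "P m"
    show "m < l - k"
    proof (rule ccontr)
      assume "\<not> m < l - k"
      then have "nat \<bar>int l - int k\<bar> \<le> m" using kl by simp
      then have "similarly_ordered p q" using \<open>P m\<close> k l unfolding P_def by metis
      then show False using ns by simp
    qed
  qed
  have "P (Greatest P)" by (rule GreatestI_nat[of P 0 "l - k"]) (use P0 Pb in auto)
  then have "Greatest P < l - k" using Pb by blast
  moreover have "farey_f n = Greatest P" by (simp add: farey_f_def P_def)
  ultimately show ?thesis using lkT by simp
qed
lemma arA:
  fixes a b t r :: int
  assumes t: "1 \<le> t" and r: "1 \<le> r" "r \<le> 3" and n7: "\<not> (t = 1 \<and> r = 3)"
    and b: "b \<le> 4*t+r" "1 \<le> b" "0 \<le> a"
    and c1: "b = 2*a \<Longrightarrow> a = 1" and c2: "even a \<Longrightarrow> even b \<Longrightarrow> False"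
    and h1: "2*t*b < a*(4*t+1)" and h2: "a*(4*t) \<le> (2*t+1)*b"
  shows "(a = 1 \<and> b = 2) \<or> (a = 2*t+1 \<and> b = 4*t) \<or> (a = 2*t+1 \<and> b = 4*t+3)
     \<or> (b + 1 = 2*a \<and> t+1 \<le> a \<and> 2*a \<le> 4*t+r+1)"
proof -
  consider "b \<ge> 2*a+1" | "b = 2*a" | "b = 2*a - 1" | "b = 2*a-2" | "b \<le> 2*a - 3" by linarith
  then show ?thesis
  proof cases
    case 1
    have "2*t*(2*a+1) \<le> 2*t*b" using 1 t by (intro mult_left_mono) auto
    then have "a \<ge> 2*t+1" using h1 by (simp add: algebra_simps)
    then show ?thesis using 1 b r by auto
  next
    case 2 then show ?thesis using c1 by auto
  next
    case 3
    have "a*(4*t) \<le> (2*t+1)*(2*a-1)" using h2 3 by simp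
    then have "a \<ge> t+1" by (simp add: algebra_simps)
    then show ?thesis using 3 b by auto
  next
    case 4
    have "a*(4*t) \<le> (2*t+1)*(2*a-2)" using h2 4 by simp
    then have "a \<ge> 2*t+1" by (simp add: algebra_simps)
    moreover have "a \<noteq> 2*t+2" using c2 4 by auto
    ultimately show ?thesis using 4 b r by auto
  next
    case 5
    define e where "e = 2*a - b"
    have e3: "e \<ge> 3" using 5 e_def by simp
    have "2*t*(b+e) = 2*t*(2*a)" using e_def by simp
    then have "a*(4*t) = 2*t*b + 2*t*e" by (simp add: algebra_simps)
    then have "2*t*e \<le> b" using h2 by (simp add: algebra_simps)
    moreover have "2*t*3 \<le> 2*t*e" using e3 t by (intro mult_left_mono) auto
    ultimately have tt: "t = 1" using b r t by linarith
    then have "2*e \<le> b" using \<open>2*t*e \<le> b\<close> by simp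
    then have "b = 6" "e = 3" using e3 b r n7 tt by auto
    then show ?thesis using e_def by presburger
  qed
qed

lemma arB:
  fixes a b t :: int
  assumes t: "1 \<le> t"
    and b: "b \<le> 4*t" "1 \<le> b" "0 \<le> a"
    and c1: "b = 2*a \<Longrightarrow> a = 1"
    and h1: "(2*t-1)*b < a*(4*t)" and h2: "a*(4*t-1) \<le> 2*t*b"
  shows "(a = 1 \<and> b = 2) \<or> (a = 2*t \<and> b = 4*t-1) \<or> (b = 2*a+1 \<and> t \<le> a \<and> a < 2*t)"
proof -
  consider "b \<ge> 2*a+2" | "b = 2*a+1" | "b = 2*a" | "b = 2*a - 1" | "b \<le> 2*a-2" by linarith
  then show ?thesis
  proof cases
    case 1
    have "(2*t-1)*(2*a+2) \<le> (2*t-1)*b" using 1 t by (intro mult_left_mono) auto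
    then have "2*a > 4*t-2" using h1 by (simp add: algebra_simps)
    then show ?thesis using 1 b by auto
  next
    case 2
    have "(2*t-1)*(2*a+1) < a*(4*t)" using h1 2 by simp
    then have "2*a > 2*t-1" by (simp add: algebra_simps)
    then show ?thesis using 2 b by auto
  next
    case 3 then show ?thesis using c1 by auto
  next
    case 4
    have "a*(4*t-1) \<le> 2*t*(2*a-1)" using h2 4 by simp
    then have "a \<ge> 2*t" by (simp add: algebra_simps)
    then show ?thesis using 4 b by auto
  next
    case 5
    define e where "e = 2*a - b"
    have e2: "e \<ge> 2" using 5 e_def by simp
    have "2*t*(b+e) = 2*t*(2*a)" using e_def by simp
    then have "a*(4*t-1) = 2*t*b + 2*t*e - a" by (simp add: algebra_simps)
    then have "2*t*e \<le> a" using h2 by (simp add: algebra_simps)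
    moreover have "2*t*2 \<le> 2*t*e" using e2 t by (intro mult_left_mono) auto
    moreover have "2*1*e \<le> 2*t*e" using e2 t by (intro mult_right_mono) auto
    ultimately show ?thesis using b e_def t by linarith
  qed
qed

lemma fv_lt: "0 < b \<Longrightarrow> 0 < d \<Longrightarrow> fv (a,b) < fv (c,d) \<longleftrightarrow> a*d < c*b"
proof -
  assume "0 < b" "0 < d"
  then have "fv (a,b) < fv (c,d) \<longleftrightarrow> (of_nat a * of_nat d :: rat) < of_nat c * of_nat b"
    by (simp add: fv_def divide_simps)
  also have "\<dots> \<longleftrightarrow> a*d < c*b" by (metis of_nat_less_iff of_nat_mult)
  finally show ?thesis .
qed

lemma fv_le: "0 < b \<Longrightarrow> 0 < d \<Longrightarrow> fv (a,b) \<le> fv (c,d) \<longleftrightarrow> a*d \<le> c*b"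
  by (meson fv_lt not_less)

lemma cop: "u * x = v * y + (1::nat) \<Longrightarrow> coprime x y"
proof -
  assume h: "u * x = v * y + 1"
  have "gcd x y dvd u * x" "gcd x y dvd v * y" by auto
  then have "gcd x y dvd 1" using h by (metis dvd_add_right_iff)
  then show ?thesis by (simp add: coprime_iff_gcd_eq_1)
qed

lemma cop_conds:
  fixes a b :: nat
  assumes "coprime a b"
  shows "b = 2*a \<Longrightarrow> a = 1" and "even a \<Longrightarrow> even b \<Longrightarrow> False"
proof -
  show "b = 2*a \<Longrightarrow> a = 1" using assms by simp
  show "even a \<Longrightarrow> even b \<Longrightarrow> False" using assms
    by (metis coprime_common_divisor_nat dvd_refl numeral_One numeral_eq_iff semiring_norm(85))
qed

lemma case0:
  assumes n: "n = 4*(s+1)"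
  shows "farey_f n \<le> n div 4 + farey_d n"
proof -
  define t where "t = s+1"
  define p where "p = (2*s+1, 4*s+4)"
  define q where "q = (2*s+2, 4*s+3)"
  define T where "T = {(1::nat,2::nat),(2*t,4*t-1)} \<union> (\<lambda>a. (a,2*a+1)) ` {t..<2*t}"
  have "(s+1)*(4*s+4) = (2*s+3)*(2*s+1) + (1::nat)" by (simp add: algebra_simps)
  then have "coprime (4*s+4) (2*s+1)" by (rule cop)
  then have pS: "p \<in> fS n" using n by (auto simp: p_def fS_def coprime_commute)
  have qS: "q \<in> fS n" using n cop[of 2 "2*s+2" 1 "4*s+3"]
    by (auto simp: q_def fS_def algebra_simps)
  have lt: "fv p < fv q" unfolding p_def q_def by (subst fv_lt) (auto simp: algebra_simps)
  have ns: "\<not> similarly_ordered p q" by (simp add: similarly_ordered_def p_def q_def)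
  have fT: "finite T" by (simp add: T_def)
  have sub: "{x \<in> fS n. fv p < fv x \<and> fv x \<le> fv q} \<subseteq> T"
  proof
    fix x assume x: "x \<in> {x \<in> fS n. fv p < fv x \<and> fv x \<le> fv q}"
    obtain a b where ab: "x = (a,b)" by (cases x)
    have hb: "1 \<le> b" "b \<le> n" "a \<le> b" "coprime a b" using x ab by (auto simp: fS_def)
    have "fv (2*s+1,4*s+4) < fv (a,b)" using x ab p_def by simp
    then have h1: "(2*s+1)*b < a*(4*s+4)" using hb fv_lt[of "4*s+4" b "2*s+1" a] by simp
    have "fv (a,b) \<le> fv (2*s+2,4*s+3)" using x ab q_def by simp
    then have h2: "a*(4*s+3) \<le> (2*s+2)*b" using hb fv_le[of b "4*s+3" a "2*s+2"] by simp
    have c1: "int b = 2 * int a \<Longrightarrow> int a = 1" using cop_conds(1)[OF hb(4)] by linarith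
    have "(int a = 1 \<and> int b = 2) \<or> (int a = 2*int t \<and> int b = 4*int t-1)
       \<or> (int b = 2*int a+1 \<and> int t \<le> int a \<and> int a < 2*int t)"
    proof (rule arB)
      show "1 \<le> int t" by (simp add: t_def)
      show "int b \<le> 4 * int t" using hb n t_def by simp
      show "1 \<le> int b" using hb by simp
      show "0 \<le> int a" by simp
      show "int b = 2 * int a \<Longrightarrow> int a = 1" by (rule c1)
      have "int ((2*s+1)*b) < int (a*(4*s+4))" using h1 by linarith
      then show "(2 * int t - 1) * int b < int a * (4 * int t)" by (simp add: t_def algebra_simps)
      have "int (a*(4*s+3)) \<le> int ((2*s+2)*b)" using h2 by linarith
      then show "int a * (4 * int t - 1) \<le> 2 * int t * int b" by (simp add: t_def algebra_simps)
    qed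
    then have "(a = 1 \<and> b = 2) \<or> (a = 2*t \<and> b = 4*t-1) \<or> (b = 2*a+1 \<and> t \<le> a \<and> a < 2*t)"
      by linarith
    then show "x \<in> T" using ab unfolding T_def by auto
  qed
  have "card T \<le> card {(1::nat,2::nat),(2*t,4*t-1)} + card ((\<lambda>a. (a,2*a+1)) ` {t..<2*t})"
    unfolding T_def by (rule card_Un_le)
  also have "\<dots> \<le> 2 + t" using card_image_le[of "{t..<2*t}" "(\<lambda>a. (a,2*a+1))"]
    by (simp add: card_insert_if)
  finally have "card T \<le> 2 + t" .
  moreover have "farey_f n + 1 \<le> card T" by (rule key[OF pS qS lt ns fT sub])
  moreover have "n div 4 = t" "farey_d n = 1" using n t_def by (auto simp: farey_d_def)
  ultimately show ?thesis by simp
qed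

lemma caseR:
  assumes n: "n = 4*t + r" and t: "1 \<le> t" and r: "1 \<le> r" "r \<le> 3" and n7: "\<not> (t = 1 \<and> r = 3)"
  shows "farey_f n \<le> n div 4 + farey_d n"
proof -
  define p where "p = (2*t, 4*t+1)"
  define q where "q = (2*t+1, 4*t)"
  define A where "A = {(1::nat,2::nat),(2*t+1,4*t)}"
  define B where "B = {(2*t+1,4*t+3)} \<inter> {x. snd x \<le> n}"
  define C where "C = (\<lambda>a. (a,2*a-1)) ` {t+1..(n+1) div 2}"
  define T where "T = A \<union> B \<union> C"
  have "1*(4*t+1) = 2*(2*t) + (1::nat)" by simp
  then have "coprime (4*t+1) (2*t)" by (rule cop)
  then have pS: "p \<in> fS n" using n r by (auto simp: p_def fS_def coprime_commute)
  have "(2*t+1)*(2*t+1) = (t+1)*(4*t) + (1::nat)" by (simp add: algebra_simps)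
  then have "coprime (2*t+1) (4*t)" by (rule cop)
  then have qS: "q \<in> fS n" using n t by (auto simp: q_def fS_def)
  have lt: "fv p < fv q" unfolding p_def q_def using t by (subst fv_lt) (auto simp: algebra_simps)
  have ns: "\<not> similarly_ordered p q" by (simp add: similarly_ordered_def p_def q_def)
  have fT: "finite T" by (simp add: T_def A_def B_def C_def)
  have sub: "{x \<in> fS n. fv p < fv x \<and> fv x \<le> fv q} \<subseteq> T"
  proof
    fix x assume x: "x \<in> {x \<in> fS n. fv p < fv x \<and> fv x \<le> fv q}"
    obtain a b where ab: "x = (a,b)" by (cases x)
    have hb: "1 \<le> b" "b \<le> n" "a \<le> b" "coprime a b" using x ab by (auto simp: fS_def)
    have "fv (2*t,4*t+1) < fv (a,b)" using x ab p_def by simp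
    then have h1: "2*t*b < a*(4*t+1)" using hb fv_lt[of "4*t+1" b "2*t" a] by simp
    have "fv (a,b) \<le> fv (2*t+1,4*t)" using x ab q_def by simp
    then have h2: "a*(4*t) \<le> (2*t+1)*b" using hb t fv_le[of b "4*t" a "2*t+1"] by simp
    have c1: "int b = 2 * int a \<Longrightarrow> int a = 1" using cop_conds(1)[OF hb(4)] by linarith
    have c2: "even (int a) \<Longrightarrow> even (int b) \<Longrightarrow> False" using cop_conds(2)[OF hb(4)] by simp
    have "(int a = 1 \<and> int b = 2) \<or> (int a = 2*int t+1 \<and> int b = 4*int t) \<or> (int a = 2*int t+1 \<and> int b = 4*int t+3)
     \<or> (int b + 1 = 2*int a \<and> int t+1 \<le> int a \<and> 2*int a \<le> 4*int t+int r+1)"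
    proof (rule arA)
      show "1 \<le> int t" using t by simp
      show "1 \<le> int r" "int r \<le> 3" using r by auto
      show "\<not> (int t = 1 \<and> int r = 3)" using n7 by simp
      show "int b \<le> 4 * int t + int r" using hb n by simp
      show "1 \<le> int b" using hb by simp
      show "0 \<le> int a" by simp
      show "int b = 2 * int a \<Longrightarrow> int a = 1" by (rule c1)
      show "even (int a) \<Longrightarrow> even (int b) \<Longrightarrow> False" by (rule c2)
      have "int (2*t*b) < int (a*(4*t+1))" using h1 by linarith
      then show "2 * int t * int b < int a * (4 * int t + 1)" by (simp add: algebra_simps)
      have "int (a*(4*t)) \<le> int ((2*t+1)*b)" using h2 by linarith
      then show "int a * (4 * int t) \<le> (2 * int t + 1) * int b" by (simp add: algebra_simps)
    qed
    then have "(a = 1 \<and> b = 2) \<or> (a = 2*t+1 \<and> b = 4*t) \<or> (a = 2*t+1 \<and> b = 4*t+3)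
     \<or> (b + 1 = 2*a \<and> t+1 \<le> a \<and> 2*a \<le> n+1)" using n by linarith
    then consider "x \<in> A" | "x \<in> B" | "b + 1 = 2*a" "t+1 \<le> a" "2*a \<le> n+1"
      using ab hb unfolding A_def B_def by auto
    then show "x \<in> T"
    proof cases
      case 3
      have "a \<le> (n+1) div 2" using 3 by presburger
      then have "x \<in> C" unfolding C_def using 3 ab by (intro image_eqI[of _ _ a]) auto
      then show ?thesis by (simp add: T_def)
    qed (auto simp: T_def)
  qed
  have "card T \<le> card A + card B + card C"
    unfolding T_def by (meson card_Un_le add_right_mono order_trans)
  moreover have "card A \<le> 2" by (simp add: A_def card_insert_if)
  moreover have "card B \<le> (if r = 3 then 1 else 0)"
  proof (cases "r = 3")
    case True then show ?thesis by (simp add: B_def card_le_Suc0_iff_eq)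
  next
    case False then have "B = {}" using n r by (auto simp: B_def)
    then show ?thesis by simp
  qed
  moreover have "card C \<le> (n+1) div 2 - t"
    using card_image_le[of "{t+1..(n+1) div 2}" "(\<lambda>a. (a,2*a-1))"] by (simp add: C_def)
  moreover have "farey_f n + 1 \<le> card T" by (rule key[OF pS qS lt ns fT sub])
  moreover have "n div 4 = t" using n r by simp
  moreover have "(n+1) div 2 = (if r = 3 then 2*t+2 else 2*t+1)" using n r by auto
  moreover have "farey_d n = (if r = 3 then 4 else 2)" using n r by (auto simp: farey_d_def)
  ultimately show ?thesis by (auto split: if_splits)
qed

lemma case7: "farey_f 7 \<le> 7 div 4 + farey_d 7"
proof -
  define p where "p = (1::nat, 6::nat)"
  define q where "q = (2::nat, 5::nat)"
  define T where "T = {(1::nat,5::nat),(1,4),(2,7),(1,3),(2,5)}"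
  have pS: "p \<in> fS 7" by (simp add: p_def fS_def)
  have qS: "q \<in> fS 7" by (simp add: q_def fS_def)
  have lt: "fv p < fv q" unfolding p_def q_def by (subst fv_lt) auto
  have ns: "\<not> similarly_ordered p q" by (simp add: similarly_ordered_def p_def q_def)
  have fT: "finite T" by (simp add: T_def)
  have sub: "{x \<in> fS 7. fv p < fv x \<and> fv x \<le> fv q} \<subseteq> T"
  proof
    fix x assume x: "x \<in> {x \<in> fS 7. fv p < fv x \<and> fv x \<le> fv q}"
    obtain a b where ab: "x = (a,b)" by (cases x)
    have hb: "1 \<le> b" "b \<le> 7" "a \<le> b" "coprime a b" using x ab by (auto simp: fS_def)
    have "fv (1,6) < fv (a,b)" using x ab p_def by simp
    then have h1: "1*b < a*6" using hb fv_lt[of 6 b 1 a] by simp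
    have "fv (a,b) \<le> fv (2,5)" using x ab q_def by simp
    then have h2: "a*5 \<le> 2*b" using hb fv_le[of b 5 a 2] by simp
    have "a = 1 \<or> a = 2" using h1 h2 hb by linarith
    then show "x \<in> T"
    proof
      assume "a = 1"
      then have "b = 3 \<or> b = 4 \<or> b = 5" using h1 h2 by linarith
      then show ?thesis using ab \<open>a = 1\<close> by (auto simp: T_def)
    next
      assume a2: "a = 2"
      then have "b = 5 \<or> b = 6 \<or> b = 7" using h1 h2 hb by linarith
      moreover have "b \<noteq> 6" using cop_conds(2)[OF hb(4)] a2 by auto
      ultimately show ?thesis using ab a2 by (auto simp: T_def)
    qed
  qed
  have "farey_f 7 + 1 \<le> card T" by (rule key[OF pS qS lt ns fT sub])
  moreover have "card T = 5" by (simp add: T_def)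
  ultimately show ?thesis by (simp add: farey_d_def)
qed

theorem theorem1:
  fixes n :: nat
  assumes "n \<ge> 4"
  shows "farey_f n \<le> n div 4 + farey_d n"
proof -
  define t where "t = n div 4"
  define r where "r = n mod 4"
  have n: "n = 4*t + r" "r < 4" "1 \<le> t" using assms by (auto simp: t_def r_def)
  show ?thesis
  proof (cases "r = 0")
    case True
    then have "n = 4*((t-1)+1)" using n by simp
    then show ?thesis by (rule case0)
  next
    case False
    show ?thesis
    proof (cases "t = 1 \<and> r = 3")
      case True
      then have "n = 7" using n by simp
      then show ?thesis using case7 by simp
    next
      case False
      then show ?thesis using caseR[of n t r] n \<open>r \<noteq> 0\<close> by simp
    qed
  qed
qed

end
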